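(* (a) There exist $n$ and a linear subspace $X\subset \mathrm{Mat}_{n\times n}(\mathbb{R})$ such that $\mathrm{MinRank}(X\otimes X)<(\mathrm{MinRank}(X))^2$. (b) For every integer $N\ge 0$ there exist $n$ and a linear subspace $X\subset\mathrm{Mat}_{n\times n}(\mathbb{R})$ such that $(\mathrm{MinRank}(X))^2-\mathrm{MinRank}(X\otimes X)\ge N$.
   Context: For a nonzero linear subspace $X\subset\mathrm{Mat}_{n\times n}(\mathbb{R})$, $\mathrm{MinRank}(X)$ is the minimal rank of a nonzero matrix in $X$. $X\otimes X\subset \mathrm{Mat}_{n^2\times n^2}(\mathbb{R})$ denotes the linear span of all Kronecker products $x\otimes y$ with $x,y\in X$. *)

theory Defs
  imports "Jordan_Normal_Form.DL_Rank"
begin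

definition mat_rank :: "real mat \<Rightarrow> nat" where
  "mat_rank A = vec_space.rank (dim_row A) A"

definition is_mat_subspace :: "nat \<Rightarrow> real mat set \<Rightarrow> bool" where
  "is_mat_subspace n X \<longleftrightarrow> X \<subseteq> carrier_mat n n \<and> 0\<^sub>m n n \<in> X \<and>
     (\<forall>x\<in>X. \<forall>y\<in>X. x + y \<in> X) \<and> (\<forall>c. \<forall>x\<in>X. c \<cdot>\<^sub>m x \<in> X)"

definition mat_span :: "nat \<Rightarrow> real mat set \<Rightarrow> real mat set" where
  "mat_span n S = \<Inter> {Y. is_mat_subspace n Y \<and> S \<subseteq> Y}"

definition kron :: "real mat \<Rightarrow> real mat \<Rightarrow> real mat" where
  "kron A B = mat (dim_row A * dim_row B) (dim_col A * dim_col B)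
     (\<lambda>(i, j). A $$ (i div dim_row B, j div dim_col B) * B $$ (i mod dim_row B, j mod dim_col B))"

definition tensor_space :: "nat \<Rightarrow> real mat set \<Rightarrow> real mat set" where
  "tensor_space n X = mat_span (n * n) {kron x y | x y. x \<in> X \<and> y \<in> X}"

definition min_rank :: "nat \<Rightarrow> real mat set \<Rightarrow> nat" where
  "min_rank n X = Min {mat_rank x | x. x \<in> X \<and> x \<noteq> 0\<^sub>m n n}"

end

theory Submission imports Defs begin

definition pt :: "nat \<Rightarrow> nat" where "pt a = (if even a then Suc a else a - 1)"
definition sg :: "nat \<Rightarrow> real" where "sg a = (if even a then -1 else 1)"
definition Jm :: "nat \<Rightarrow> real mat" where "Jm n = mat n n (\<lambda>(a,k). if k = pt a then sg a else 0)"

lemma pt_lt: "even n \<Longrightarrow> a < n \<Longrightarrow> pt a < n"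
  unfolding pt_def by (auto elim!: evenE oddE)
lemma pt_pt[simp]: "pt (pt a) = a" unfolding pt_def by (auto elim!: oddE)
lemma pt_neq: "pt a \<noteq> a" unfolding pt_def by (auto elim!: oddE)
lemma sg_pt: "sg (pt a) = - sg a" unfolding pt_def sg_def by (auto elim!: oddE)
lemma even_pt[simp]: "even (pt a) \<longleftrightarrow> odd a" unfolding pt_def by (auto elim!: oddE)
lemma pt_eq_iff: "pt a = b \<longleftrightarrow> a = pt b" by (metis pt_pt)

lemma Jm_carrier[simp]: "Jm n \<in> carrier_mat n n" unfolding Jm_def by simp

lemma JJ_entry:
  assumes n: "even n" and i: "i < n" and j: "j < n"
  shows "(\<Sum>k<n. (if k = pt i then sg i else 0) * (if j = pt k then sg k else 0)) = (if i = j then -1 else 0)"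
proof -
  have "(\<Sum>k<n. (if k = pt i then sg i else 0) * (if j = pt k then sg k else 0))
     = (\<Sum>k<n. if k = pt i then sg i * (if j = pt k then sg k else 0) else 0)"
    by (rule sum.cong) auto
  also have "\<dots> = sg i * (if j = pt (pt i) then sg (pt i) else 0)"
    using pt_lt[OF n i] by (simp add: sum.delta')
  also have "\<dots> = (if i = j then -1 else 0)" by (auto simp: sg_pt sg_def)
  finally show ?thesis .
qed

lemma M_prod:
  assumes n: "even n"
  shows "(a \<cdot>\<^sub>m 1\<^sub>m n + b \<cdot>\<^sub>m Jm n) * (a \<cdot>\<^sub>m 1\<^sub>m n + (-b) \<cdot>\<^sub>m Jm n) = (a^2 + b^2) \<cdot>\<^sub>m 1\<^sub>m n"
proof (rule eq_matI)
  fix i j assume i: "i < dim_row ((a^2 + b^2) \<cdot>\<^sub>m 1\<^sub>m n)" and j: "j < dim_col ((a^2 + b^2) \<cdot>\<^sub>m 1\<^sub>m n)"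
  hence i: "i < n" and j: "j < n" by auto
  have "((a \<cdot>\<^sub>m 1\<^sub>m n + b \<cdot>\<^sub>m Jm n) * (a \<cdot>\<^sub>m 1\<^sub>m n + (-b) \<cdot>\<^sub>m Jm n)) $$ (i, j) = (\<Sum>k<n. ((if i = k then a else 0) + b * (if k = pt i then sg i else 0)) *
               ((if k = j then a else 0) + (-b) * (if j = pt k then sg k else 0)))"
    using i j by (auto simp: Jm_def scalar_prod_def lessThan_atLeast0 intro!: sum.cong)
  also have "(\<Sum>k<n. ((if i = k then a else 0) + b * (if k = pt i then sg i else 0)) *
               ((if k = j then a else 0) + (-b) * (if j = pt k then sg k else 0)))
        = (\<Sum>k<n. (if i = k then a else 0) * (if k = j then a else 0))
        + (\<Sum>k<n. (if i = k then a else 0) * ((-b) * (if j = pt k then sg k else 0)))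
        + (\<Sum>k<n. (b * (if k = pt i then sg i else 0)) * (if k = j then a else 0))
        - b * b * (\<Sum>k<n. (if k = pt i then sg i else 0) * (if j = pt k then sg k else 0))"
    by (simp add: algebra_simps sum.distrib sum_distrib_left sum_subtractf sum_negf)
  also have "\<dots> = (if i = j then a^2 + b^2 else 0)"
  proof -
    have s1: "(\<Sum>k<n. (if i = k then a else 0) * (if k = j then a else 0)) = (if i = j then a*a else 0)"
    proof -
      have "(\<Sum>k<n. (if i = k then a else 0) * (if k = j then a else 0)) = (\<Sum>k<n. if k = i then a * (if i = j then a else 0) else 0)"
        by (rule sum.cong) auto
      thus ?thesis using i by (simp add: sum.delta')
    qed
    have s2: "(\<Sum>k<n. (if i = k then a else 0) * ((-b) * (if j = pt k then sg k else 0))) = a * ((-b) * (if j = pt i then sg i else 0))"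
    proof -
      have "(\<Sum>k<n. (if i = k then a else 0) * ((-b) * (if j = pt k then sg k else 0))) = (\<Sum>k<n. if k = i then a * ((-b) * (if j = pt i then sg i else 0)) else 0)"
        by (rule sum.cong) auto
      thus ?thesis using i by (simp add: sum.delta')
    qed
    have s3: "(\<Sum>k<n. (b * (if k = pt i then sg i else 0)) * (if k = j then a else 0)) = b * (if j = pt i then sg i else 0) * a"
    proof -
      have "(\<Sum>k<n. (b * (if k = pt i then sg i else 0)) * (if k = j then a else 0)) = (\<Sum>k<n. if k = j then b * (if j = pt i then sg i else 0) * a else 0)"
        by (rule sum.cong) auto
      thus ?thesis using j by (simp add: sum.delta')
    qed
    show ?thesis unfolding s1 s2 s3 JJ_entry[OF n i j] by (simp add: power2_eq_square)
  qed
  finally show "((a \<cdot>\<^sub>m 1\<^sub>m n + b \<cdot>\<^sub>m Jm n) * (a \<cdot>\<^sub>m 1\<^sub>m n + (-b) \<cdot>\<^sub>m Jm n)) $$ (i, j) = ((a^2 + b^2) \<cdot>\<^sub>m 1\<^sub>m n) $$ (i, j)"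
    using i j by simp
qed (auto simp: Jm_def)


lemma rank_sum_le:
  fixes f g :: "'i \<Rightarrow> nat \<Rightarrow> real"
  assumes "finite I" "A \<in> carrier_mat N M"
    "\<And>r c. r < N \<Longrightarrow> c < M \<Longrightarrow> A $$ (r,c) = (\<Sum>i\<in>I. f i r * g i c)"
  shows "vec_space.rank N A \<le> card I"
  using assms
proof (induction I arbitrary: A rule: finite_induct)
  case empty
  have "A = 0\<^sub>m N M" using empty by (intro eq_matI) auto
  thus ?case using vec_space.rank_0I by simp
next
  case (insert x F)
  define B where "B = mat N M (\<lambda>(r,c). \<Sum>i\<in>F. f i r * g i c)"
  define C where "C = mat N M (\<lambda>(r,c). f x r * g x c)"
  have B: "B \<in> carrier_mat N M" and C: "C \<in> carrier_mat N M" unfolding B_def C_def by auto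
  have A: "A = C + B"
    using insert by (intro eq_matI) (auto simp: B_def C_def)
  have "vec_space.rank N B \<le> card F"
    using insert.IH[OF B] B_def by auto
  moreover have "vec_space.rank N C \<le> 1"
    by (rule vec_space.rank_le_1_product_entries[OF C, of "f x" "g x"]) (auto simp: C_def)
  moreover have "vec_space.rank N A \<le> vec_space.rank N C + vec_space.rank N B"
    unfolding A by (rule vec_space.rank_subadditive[OF C B])
  ultimately show ?case using insert by simp
qed

definition rp :: "nat \<times> nat \<Rightarrow> nat \<times> nat" where
  "rp x = (if even (fst x) then x else (pt (fst x), pt (snd x)))"
definition vl :: "nat \<times> nat \<Rightarrow> real" where
  "vl x = (if even (fst x) then 1 else - sg (pt (fst x)) * sg (pt (snd x)))"

lemma T_entry_decomp:
  "(if a = c then 1 else 0) * (if a' = c' then 1 else 0)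
     - (if c = pt a then sg a else 0) * (if c' = pt a' then sg a' else 0)
   = (if rp (a,a') = rp (c,c') then vl (a,a') * vl (c,c') else (0::real))"
  unfolding rp_def vl_def
  by (auto simp: sg_pt pt_eq_iff pt_neq pt_neq[symmetric] sg_def)


definition Xs :: "nat \<Rightarrow> real mat set" where
  "Xs n = {a \<cdot>\<^sub>m 1\<^sub>m n + b \<cdot>\<^sub>m Jm n | a b. True}"

definition Tm :: "nat \<Rightarrow> real mat" where
  "Tm n = kron (1\<^sub>m n) (1\<^sub>m n) + (-1) \<cdot>\<^sub>m kron (Jm n) (Jm n)"

lemma kron_carrier: "x \<in> carrier_mat n n \<Longrightarrow> y \<in> carrier_mat n n \<Longrightarrow> kron x y \<in> carrier_mat (n*n) (n*n)"
  unfolding kron_def by auto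

lemma Xs_subspace: "is_mat_subspace n (Xs n)"
  unfolding is_mat_subspace_def
proof (intro conjI ballI allI subsetI)
  fix x assume "x \<in> Xs n" thus "x \<in> carrier_mat n n" unfolding Xs_def by auto
next
  have "0\<^sub>m n n = 0 \<cdot>\<^sub>m 1\<^sub>m n + 0 \<cdot>\<^sub>m Jm n" by (intro eq_matI) (auto simp: Jm_def)
  thus "0\<^sub>m n n \<in> Xs n" unfolding Xs_def by blast
next
  fix x y assume "x \<in> Xs n" "y \<in> Xs n"
  then obtain a b c d where x: "x = a \<cdot>\<^sub>m 1\<^sub>m n + b \<cdot>\<^sub>m Jm n" and y: "y = c \<cdot>\<^sub>m 1\<^sub>m n + d \<cdot>\<^sub>m Jm n"
    unfolding Xs_def by blast
  have "x + y = (a + c) \<cdot>\<^sub>m 1\<^sub>m n + (b + d) \<cdot>\<^sub>m Jm n"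
    unfolding x y by (intro eq_matI) (auto simp: Jm_def algebra_simps)
  thus "x + y \<in> Xs n" unfolding Xs_def by blast
next
  fix c x assume "x \<in> Xs n"
  then obtain a b where x: "x = a \<cdot>\<^sub>m 1\<^sub>m n + b \<cdot>\<^sub>m Jm n" unfolding Xs_def by blast
  have "c \<cdot>\<^sub>m x = (c * a) \<cdot>\<^sub>m 1\<^sub>m n + (c * b) \<cdot>\<^sub>m Jm n"
    unfolding x by (intro eq_matI) (auto simp: Jm_def algebra_simps)
  thus "c \<cdot>\<^sub>m x \<in> Xs n" unfolding Xs_def by blast
qed

lemma one_in_Xs: "1\<^sub>m n \<in> Xs n"
proof -
  have "1\<^sub>m n = 1 \<cdot>\<^sub>m 1\<^sub>m n + 0 \<cdot>\<^sub>m Jm n" by (intro eq_matI) (auto simp: Jm_def)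
  thus ?thesis unfolding Xs_def by blast
qed

lemma J_in_Xs: "Jm n \<in> Xs n"
proof -
  have "Jm n = 0 \<cdot>\<^sub>m 1\<^sub>m n + 1 \<cdot>\<^sub>m Jm n" by (intro eq_matI) (auto simp: Jm_def)
  thus ?thesis unfolding Xs_def by blast
qed

lemma Xs_rank:
  assumes n: "even n" and x: "x \<in> Xs n" and nz: "x \<noteq> 0\<^sub>m n n"
  shows "mat_rank x = n"
proof -
  obtain a b where xd: "x = a \<cdot>\<^sub>m 1\<^sub>m n + b \<cdot>\<^sub>m Jm n" using x unfolding Xs_def by blast
  have ab: "a \<noteq> 0 \<or> b \<noteq> 0"
  proof (rule ccontr)
    assume "\<not> (a \<noteq> 0 \<or> b \<noteq> 0)"
    hence "x = 0\<^sub>m n n" unfolding xd by (intro eq_matI) (auto simp: Jm_def)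
    thus False using nz by simp
  qed
  hence pos: "a^2 + b^2 \<noteq> 0" by (simp add: sum_power2_eq_zero_iff)
  define y where "y = a \<cdot>\<^sub>m 1\<^sub>m n + (-b) \<cdot>\<^sub>m Jm n"
  have xc: "x \<in> carrier_mat n n" and yc: "y \<in> carrier_mat n n" unfolding xd y_def by auto
  have "det x * det y = det ((a^2 + b^2) \<cdot>\<^sub>m 1\<^sub>m n)"
    using det_mult[OF xc yc, symmetric] M_prod[OF n, of a b] unfolding xd y_def by simp
  also have "\<dots> = (a^2+b^2)^n" by simp
  finally have "det x \<noteq> 0" using pos by auto
  hence "vec_space.rank n x = n" by (rule vec_space.low_rank_det_zero[OF xc])
  thus ?thesis unfolding mat_rank_def using xc by simp
qed

lemma min_rank_Xs:
  assumes n: "even n" "n > 0"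
  shows "min_rank n (Xs n) = n"
proof -
  have "{mat_rank x | x. x \<in> Xs n \<and> x \<noteq> 0\<^sub>m n n} = {n}"
  proof -
    have "(1\<^sub>m n :: real mat) $$ (0,0) \<noteq> 0\<^sub>m n n $$ (0,0)" using n by simp
    hence "(1\<^sub>m n :: real mat) \<noteq> 0\<^sub>m n n" by metis
    hence "n \<in> {mat_rank x | x. x \<in> Xs n \<and> x \<noteq> 0\<^sub>m n n}"
      using Xs_rank[OF n(1) one_in_Xs] one_in_Xs[of n] by (metis (mono_tags, lifting) mem_Collect_eq)
    thus ?thesis using Xs_rank[OF n(1)] by blast
  qed
  thus ?thesis unfolding min_rank_def by simp
qed

lemma tensor_carrier:
  assumes "X \<subseteq> carrier_mat n n"
  shows "tensor_space n X \<subseteq> carrier_mat (n*n) (n*n)"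
proof -
  have "is_mat_subspace (n*n) (carrier_mat (n*n) (n*n))"
    unfolding is_mat_subspace_def by auto
  moreover have "{kron x y | x y. x \<in> X \<and> y \<in> X} \<subseteq> carrier_mat (n*n) (n*n)"
    using assms kron_carrier by blast
  ultimately show ?thesis unfolding tensor_space_def mat_span_def by blast
qed

lemma Tm_in:
  "Tm n \<in> tensor_space n (Xs n)"
  unfolding tensor_space_def mat_span_def
proof (intro InterI, clarify)
  fix Y assume sub: "is_mat_subspace (n*n) Y" and S: "{kron x y | x y. x \<in> Xs n \<and> y \<in> Xs n} \<subseteq> Y"
  have 1: "kron (1\<^sub>m n) (1\<^sub>m n) \<in> Y" using S one_in_Xs by blast
  have 2: "kron (Jm n) (Jm n) \<in> Y" using S J_in_Xs by blast
  have 3: "(-1) \<cdot>\<^sub>m kron (Jm n) (Jm n) \<in> Y" using sub 2 unfolding is_mat_subspace_def by blast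
  show "Tm n \<in> Y" unfolding Tm_def using sub 1 3 unfolding is_mat_subspace_def by blast
qed

lemma Tm_entry:
  assumes "r < n*n" "c < n*n"
  shows "Tm n $$ (r,c) = (if rp (r div n, r mod n) = rp (c div n, c mod n)
      then vl (r div n, r mod n) * vl (c div n, c mod n) else 0)"
proof -
  have n: "n > 0" using assms by (cases n) auto
  have lt: "r div n < n" "r mod n < n" "c div n < n" "c mod n < n"
    using assms n by (auto simp: less_mult_imp_div_less)
  have "Tm n $$ (r,c) = (if r div n = c div n then 1 else 0) * (if r mod n = c mod n then 1 else 0)
     - (if c div n = pt (r div n) then sg (r div n) else 0) * (if c mod n = pt (r mod n) then sg (r mod n) else 0)"
    using assms lt unfolding Tm_def kron_def Jm_def by simp
  thus ?thesis using T_entry_decomp by simp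
qed

lemma Tm_rank:
  assumes n: "n = 2*m"
  shows "mat_rank (Tm n) \<le> m * n"
proof -
  define I where "I = {(b,b'). b < n \<and> even b \<and> b' < n}"
  have Isub: "I \<subseteq> (\<lambda>(x,y). (2*x,y)) ` ({..<m} \<times> {..<n})"
  proof
    fix z assume "z \<in> I"
    then obtain b b' where z: "z = (b,b')" "b < n" "even b" "b' < n" unfolding I_def by auto
    then obtain x where "b = 2*x" by (auto elim: evenE)
    hence "x < m" "z = (2*x, b')" using z n by auto
    thus "z \<in> (\<lambda>(x,y). (2*x,y)) ` ({..<m} \<times> {..<n})" using z by force
  qed
  have finI: "finite I" by (rule finite_subset[OF Isub]) auto
  have cardI: "card I \<le> m * n"
  proof -
    have "card I \<le> card ((\<lambda>(x,y). (2*x,y)) ` ({..<m} \<times> {..<n}))"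
      by (rule card_mono[OF _ Isub]) auto
    also have "\<dots> \<le> card ({..<m} \<times> {..<n})" by (rule card_image_le) auto
    finally show ?thesis by (simp add: card_cartesian_product)
  qed
  define f where "f = (\<lambda>i r. if i = rp (r div n, r mod n) then vl (r div n, r mod n) else (0::real))"
  have rpI: "rp (r div n, r mod n) \<in> I" if "r < n*n" for r
  proof -
    have nn: "n > 0" using that by (cases n) auto
    have "r div n < n" "r mod n < n" using that nn by (auto simp: less_mult_imp_div_less)
    moreover have "even n" using n by simp
    ultimately show ?thesis unfolding rp_def I_def using pt_lt by auto
  qed
  have carr: "Tm n \<in> carrier_mat (n*n) (n*n)" unfolding Tm_def kron_def by (auto simp: Jm_def)
  have "vec_space.rank (n*n) (Tm n) \<le> card I"
  proof (rule rank_sum_le[OF finI carr])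
    fix r c assume rc: "r < n*n" "c < n*n"
    have "(\<Sum>i\<in>I. f i r * f i c) = (\<Sum>i\<in>I. if i = rp (r div n, r mod n) then
        vl (r div n, r mod n) * (if rp (r div n, r mod n) = rp (c div n, c mod n) then vl (c div n, c mod n) else 0) else 0)"
      unfolding f_def by (rule sum.cong) auto
    also have "\<dots> = Tm n $$ (r,c)" using rpI[OF rc(1)] finI Tm_entry[OF rc] by (simp add: sum.delta')
    finally show "Tm n $$ (r,c) = (\<Sum>i\<in>I. f i r * f i c)" by simp
  qed
  thus ?thesis using cardI carr unfolding mat_rank_def by simp
qed

lemma Tm_nz:
  assumes "n > 0"
  shows "Tm n \<noteq> 0\<^sub>m (n*n) (n*n)"
proof
  assume "Tm n = 0\<^sub>m (n*n) (n*n)"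
  hence "Tm n $$ (0,0) = 0" using assms by simp
  moreover have "Tm n $$ (0,0) = 1" using assms unfolding Tm_def kron_def Jm_def pt_def by simp
  ultimately show False by simp
qed


lemma partb:
  fixes N :: nat
  shows "\<exists>n X. is_mat_subspace n X \<and> X \<noteq> {0\<^sub>m n n} \<and>
            int ((min_rank n X)\<^sup>2) - int (min_rank (n * n) (tensor_space n X)) \<ge> int N"
proof -
  define m where "m = N + 1"
  define n where "n = 2 * m"
  have n0: "n > 0" "even n" unfolding n_def m_def by auto
  have sub: "is_mat_subspace n (Xs n)" by (rule Xs_subspace)
  have one_nz: "(1\<^sub>m n :: real mat) \<noteq> 0\<^sub>m n n"
  proof -
    have "(1\<^sub>m n :: real mat) $$ (0,0) \<noteq> 0\<^sub>m n n $$ (0,0)" using n0 by simp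
    thus ?thesis by metis
  qed
  have ne: "Xs n \<noteq> {0\<^sub>m n n}" using one_in_Xs[of n] one_nz by blast
  have mr: "min_rank n (Xs n) = n" using min_rank_Xs n0 by simp
  let ?S = "{mat_rank x | x. x \<in> tensor_space n (Xs n) \<and> x \<noteq> 0\<^sub>m (n*n) (n*n)}"
  have Xc: "Xs n \<subseteq> carrier_mat n n" using sub unfolding is_mat_subspace_def by blast
  have "?S \<subseteq> {..n*n}"
  proof
    fix k assume "k \<in> ?S"
    then obtain x where x: "k = mat_rank x" "x \<in> tensor_space n (Xs n)" by blast
    hence xc: "x \<in> carrier_mat (n*n) (n*n)" using tensor_carrier[OF Xc] by blast
    have "vec_space.rank (n*n) x \<le> n*n" by (rule vec_space.rank_le_nc[OF xc])
    thus "k \<in> {..n*n}" using x xc unfolding mat_rank_def by simp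
  qed
  hence fin: "finite ?S" using finite_subset by blast
  have "mat_rank (Tm n) \<in> ?S" using Tm_in[of n] Tm_nz[OF n0(1)] by blast
  hence "min_rank (n*n) (tensor_space n (Xs n)) \<le> mat_rank (Tm n)"
    unfolding min_rank_def using fin by (simp add: Min_le)
  also have "\<dots> \<le> m * n" by (rule Tm_rank) (simp add: n_def)
  finally have t: "min_rank (n*n) (tensor_space n (Xs n)) \<le> m * n" .
  have "int N \<le> int (n^2) - int (m*n)" unfolding n_def m_def by (simp add: power2_eq_square algebra_simps)
  also have "\<dots> \<le> int ((min_rank n (Xs n))\<^sup>2) - int (min_rank (n * n) (tensor_space n (Xs n)))"
  proof -
    have t': "int (min_rank (n*n) (tensor_space n (Xs n))) \<le> int (m*n)" using t by linarith
    show ?thesis unfolding mr using t' by linarith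
  qed
  finally show ?thesis using sub ne by blast
qed

theorem mainTheorem2:
  shows "(\<exists>n X. is_mat_subspace n X \<and> X \<noteq> {0\<^sub>m n n} \<and>
            min_rank (n * n) (tensor_space n X) < (min_rank n X)\<^sup>2)
       \<and> (\<forall>N::nat. \<exists>n X. is_mat_subspace n X \<and> X \<noteq> {0\<^sub>m n n} \<and>
            int ((min_rank n X)\<^sup>2) - int (min_rank (n * n) (tensor_space n X)) \<ge> int N)"
proof
  obtain n X where "is_mat_subspace n X" "X \<noteq> {0\<^sub>m n n}"
    "int ((min_rank n X)\<^sup>2) - int (min_rank (n * n) (tensor_space n X)) \<ge> int 1"
    using partb[of 1] by blast
  moreover from this(3) have "min_rank (n * n) (tensor_space n X) < (min_rank n X)\<^sup>2"
  proof -
    have "int (min_rank (n * n) (tensor_space n X)) < int ((min_rank n X)\<^sup>2)" using \<open>int ((min_rank n X)\<^sup>2) - int (min_rank (n * n) (tensor_space n X)) \<ge> int 1\<close> by linarith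
    thus ?thesis by (simp only: of_nat_less_iff)
  qed
  ultimately show "\<exists>n X. is_mat_subspace n X \<and> X \<noteq> {0\<^sub>m n n} \<and>
            min_rank (n * n) (tensor_space n X) < (min_rank n X)\<^sup>2" by blast
next
  show "\<forall>N::nat. \<exists>n X. is_mat_subspace n X \<and> X \<noteq> {0\<^sub>m n n} \<and>
            int ((min_rank n X)\<^sup>2) - int (min_rank (n * n) (tensor_space n X)) \<ge> int N"
    using partb by blast
qed

end
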